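(* Let $(S,\Delta,\mathbb{P})$ be a probability space, $(U,d)$ a separable metric space, $\mathfrak{X}$ the set of $U$-valued random variables on $S$, $r\geq 0$, $\underline{X}=\{X_n\}_{n\in\mathbb{N}}$ a sequence in $\mathfrak{X}$, and $\mathcal{I}$ an analytic $P$-ideal on $\mathbb{N}$. Then the set $\mathcal{I}^{\mathbb{P}}\text{-}LIM^r\underline{X}$ is a Borel set of type $F_{\sigma\delta}$ in $(\mathfrak{X}^0,\rho)$.
   Context: The Ky Fan metric is $\rho(X,Y)=\inf\{\varepsilon>0:\mathbb{P}(d(X,Y)>\varepsilon)\leq\varepsilon\}$; $\mathfrak{X}^0$ is the set of equivalence classes of $\mathfrak{X}$ under almost sure equality, on which $\rho$ is a metric. A submeasure on $\mathbb{N}$ is $\varphi:\mathcal{P}(\mathbb{N})\to[0,\infty]$ with $\varphi(\varnothing)=0$, monotone, subadditive, and $\varphi(\{t\})<\infty$ for all $t$; it is lower semicontinuous if $\varphi(A)=\lim_{t\to\infty}\varphi(A\cap[1,t])$ for all $A$. An ideal $\mathcal{I}$ on $\mathbb{N}$ is an analytic $P$-ideal if $\mathcal{I}=Exh(\varphi)=\{A\subseteq\mathbb{N}:\lim_{t\to\infty}\varphi(A\setminus\{1,\dots,t\})=0\}$ for some lower semicontinuous submeasure $\varphi$. The set $\mathcal{I}^{\mathbb{P}}\text{-}LIM^r\underline{X}$ consists of all $X_*\in\mathfrak{X}$ with $\{n\in\mathbb{N}:\mathbb{P}(d(X_n,X_* )>r+\varepsilon)>\delta\}\in\mathcal{I}$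 for every $\varepsilon,\delta>0$ (regarded as a subset of $\mathfrak{X}^0$). An $F_{\sigma\delta}$ set is a countable intersection of countable unions of closed sets. *)

theory Defs
  imports "HOL-Probability.Probability"
begin

definition RV :: "'s measure \<Rightarrow> ('s \<Rightarrow> 'u::metric_space) set" where
  "RV M = {X. X \<in> borel_measurable M}"

definition ky_fan :: "'s measure \<Rightarrow> ('s \<Rightarrow> 'u::metric_space) \<Rightarrow> ('s \<Rightarrow> 'u) \<Rightarrow> real" where
  "ky_fan M X Y = Inf {e. e > 0 \<and> measure M {s \<in> space M. dist (X s) (Y s) > e} \<le> e}"

text \<open>Closed sets of the (pseudo)metric space (RV M, ky_fan M). These are exactly the
  preimages of closed sets of the quotient metric space of a.s.-equivalence classes.\<close>
definition kf_closed :: "'s measure \<Rightarrow> ('s \<Rightarrow> 'u::metric_space) set \<Rightarrow> bool" where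
  "kf_closed M F \<longleftrightarrow> F \<subseteq> RV M \<and>
     (\<forall>X\<in>RV M. (\<forall>e>0. \<exists>Y\<in>F. ky_fan M X Y < e) \<longrightarrow> X \<in> F)"

definition kf_F_sigma_delta :: "'s measure \<Rightarrow> ('s \<Rightarrow> 'u::metric_space) set \<Rightarrow> bool" where
  "kf_F_sigma_delta M A \<longleftrightarrow>
     (\<exists>F :: nat \<Rightarrow> nat \<Rightarrow> ('s \<Rightarrow> 'u) set.
        (\<forall>i j. kf_closed M (F i j)) \<and> A = (\<Inter>i. \<Union>j. F i j))"

definition submeasure :: "(nat set \<Rightarrow> ennreal) \<Rightarrow> bool" where
  "submeasure \<phi> \<longleftrightarrow> \<phi> {} = 0 \<and> (\<forall>A B. A \<subseteq> B \<longrightarrow> \<phi> A \<le> \<phi> B) \<and>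
     (\<forall>A B. \<phi> (A \<union> B) \<le> \<phi> A + \<phi> B) \<and> (\<forall>t. \<phi> {t} < \<infinity>)"

definition lsc_submeasure :: "(nat set \<Rightarrow> ennreal) \<Rightarrow> bool" where
  "lsc_submeasure \<phi> \<longleftrightarrow> submeasure \<phi> \<and>
     (\<forall>A. (\<lambda>t. \<phi> (A \<inter> {..t})) \<longlonglongrightarrow> \<phi> A)"

definition Exh :: "(nat set \<Rightarrow> ennreal) \<Rightarrow> nat set set" where
  "Exh \<phi> = {A. (\<lambda>t. \<phi> (A - {..t})) \<longlonglongrightarrow> 0}"

definition analytic_P_ideal :: "nat set set \<Rightarrow> bool" where
  "analytic_P_ideal I \<longleftrightarrow> (\<exists>\<phi>. lsc_submeasure \<phi> \<and> I = Exh \<phi>)"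

definition ideal_prob_LIM ::
    "'s measure \<Rightarrow> nat set set \<Rightarrow> real \<Rightarrow> (nat \<Rightarrow> 's \<Rightarrow> 'u::metric_space) \<Rightarrow> ('s \<Rightarrow> 'u) set" where
  "ideal_prob_LIM M I r X = {Y \<in> RV M. \<forall>\<epsilon>>0. \<forall>\<delta>>0.
     {n. measure M {s \<in> space M. dist (X n s) (Y s) > r + \<epsilon>} > \<delta>} \<in> I}"

end

theory Submission
  imports Defs
begin

lemma RV_meas:
  fixes X Y :: "'s \<Rightarrow> 'u::{metric_space, second_countable_topology}"
  assumes "X \<in> RV M" "Y \<in> RV M"
  shows "{s \<in> space M. a < dist (X s) (Y s)} \<in> sets M"
proof -
  have "X \<in> borel_measurable M" "Y \<in> borel_measurable M" using assms unfolding RV_def by auto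
  then show ?thesis by measurable
qed

lemma kf_small:
  fixes Y Z :: "'s \<Rightarrow> 'u::{metric_space, second_countable_topology}"
  assumes P: "prob_space M" and Y: "Y \<in> RV M" and Z: "Z \<in> RV M" and lt: "ky_fan M Y Z < e"
  shows "measure M {s \<in> space M. e < dist (Y s) (Z s)} \<le> e"
proof -
  interpret prob_space M by fact
  let ?S = "{e. e > 0 \<and> measure M {s \<in> space M. dist (Y s) (Z s) > e} \<le> e}"
  have "1 \<in> ?S" by simp
  moreover have "bdd_below ?S" by (rule bdd_belowI[of _ 0]) auto
  ultimately obtain x where x: "x \<in> ?S" "x < e"
  proof -
    have "Inf ?S < e" using lt unfolding ky_fan_def by simp
    from cInf_lessD[OF _ this] \<open>1 \<in> ?S\<close> show ?thesis using that by blast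
  qed
  have "measure M {s \<in> space M. e < dist (Y s) (Z s)} \<le> measure M {s \<in> space M. x < dist (Y s) (Z s)}"
    by (rule finite_measure_mono) (use x(2) RV_meas[OF Y Z] in auto)
  also have "\<dots> \<le> x" using x by simp
  finally show ?thesis using x by simp
qed

lemma open_pt:
  fixes X0 Y :: "'s \<Rightarrow> 'u::{metric_space, second_countable_topology}"
  assumes P: "prob_space M" and X0: "X0 \<in> RV M" and Y: "Y \<in> RV M"
    and d: "\<delta> < measure M {s \<in> space M. a < dist (X0 s) (Y s)}"
  shows "\<exists>e>0. \<forall>Z\<in>RV M. ky_fan M Y Z < e \<longrightarrow> \<delta> < measure M {s \<in> space M. a < dist (X0 s) (Z s)}"
proof -
  interpret prob_space M by fact
  define p where "p = measure M {s \<in> space M. a < dist (X0 s) (Y s)} - \<delta>"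
  have p: "p > 0" using d p_def by simp
  define B where "B k = {s \<in> space M. a + inverse (real (Suc k)) < dist (X0 s) (Y s)}" for k
  have Bs: "range B \<subseteq> sets M" unfolding B_def using RV_meas[OF X0 Y] by auto
  have inc: "incseq B"
  proof (rule incseq_SucI)
    fix k
    have "inverse (real (Suc (Suc k))) \<le> inverse (real (Suc k))"
      by (simp add: field_simps)
    then have "a + inverse (real (Suc k)) < t \<Longrightarrow> a + inverse (real (Suc (Suc k))) < t" for t
      by linarith
    then show "B k \<subseteq> B (Suc k)" unfolding B_def by auto
  qed
  have U: "(\<Union>k. B k) = {s \<in> space M. a < dist (X0 s) (Y s)}"
  proof safe
    fix s assume s: "s \<in> space M" "a < dist (X0 s) (Y s)"
    then obtain k where "inverse (real (Suc k)) < dist (X0 s) (Y s) - a"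
      using reals_Archimedean[of "dist (X0 s) (Y s) - a"] by auto
    then have "a + inverse (real (Suc k)) < dist (X0 s) (Y s)" by linarith
    then show "s \<in> (\<Union>k. B k)" unfolding B_def using s by blast
  next
    fix s k assume "s \<in> B k"
    then show "s \<in> space M" "a < dist (X0 s) (Y s)" unfolding B_def
      by (auto intro: less_trans[rotated])
  qed
  have "(\<lambda>k. measure M (B k)) \<longlonglongrightarrow> measure M {s \<in> space M. a < dist (X0 s) (Y s)}"
    using finite_Lim_measure_incseq[OF Bs inc] U by simp
  moreover have "\<delta> + p/2 < measure M {s \<in> space M. a < dist (X0 s) (Y s)}"
    using p p_def by linarith
  ultimately have "eventually (\<lambda>k. \<delta> + p/2 < measure M (B k)) sequentially"
    by (rule order_tendstoD(1))
  then obtain k where k: "\<delta> + p/2 < measure M (B k)"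
    by (auto simp: eventually_sequentially)
  define \<eta> where "\<eta> = inverse (real (Suc k))"
  have eta: "\<eta> > 0" unfolding \<eta>_def by simp
  show ?thesis
  proof (intro exI[of _ "min \<eta> (p/2)"] conjI ballI impI)
    show "0 < min \<eta> (p / 2)" using eta p by simp
    fix Z assume Z: "Z \<in> RV M" and kz: "ky_fan M Y Z < min \<eta> (p / 2)"
    let ?e = "min \<eta> (p / 2)"
    have sm: "measure M {s \<in> space M. ?e < dist (Y s) (Z s)} \<le> ?e"
      by (rule kf_small[OF P Y Z kz])
    have sub: "B k \<subseteq> {s \<in> space M. a < dist (X0 s) (Z s)} \<union> {s \<in> space M. ?e < dist (Y s) (Z s)}"
    proof
      fix s assume s: "s \<in> B k"
      have "dist (X0 s) (Y s) \<le> dist (X0 s) (Z s) + dist (Y s) (Z s)"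
        by (metis dist_commute dist_triangle)
      then show "s \<in> {s \<in> space M. a < dist (X0 s) (Z s)} \<union> {s \<in> space M. ?e < dist (Y s) (Z s)}"
        using s unfolding B_def \<eta>_def[symmetric] by auto
    qed
    have "measure M (B k) \<le> measure M ({s \<in> space M. a < dist (X0 s) (Z s)} \<union> {s \<in> space M. ?e < dist (Y s) (Z s)})"
      by (rule finite_measure_mono[OF sub]) (use RV_meas[OF X0 Z] RV_meas[OF Y Z] in auto)
    also have "\<dots> \<le> measure M {s \<in> space M. a < dist (X0 s) (Z s)} + measure M {s \<in> space M. ?e < dist (Y s) (Z s)}"
      by (rule measure_Un_le) (use RV_meas[OF X0 Z] RV_meas[OF Y Z] in auto)
    finally show "\<delta> < measure M {s \<in> space M. a < dist (X0 s) (Z s)}"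
      using k sm by linarith
  qed
qed

lemma fin_choice_e:
  assumes "finite N"
  shows "(\<forall>n\<in>N. \<exists>e>0::real. \<forall>x. f x < e \<longrightarrow> R n x) \<Longrightarrow> \<exists>e>0. \<forall>n\<in>N. \<forall>x. f x < e \<longrightarrow> R n x"
  using assms
proof (induction N rule: finite_induct)
  case empty
  then show ?case by (auto intro: exI[of _ 1])
next
  case (insert a N)
  then obtain e1 where e1: "e1 > 0" "\<forall>n\<in>N. \<forall>x. f x < e1 \<longrightarrow> R n x" by auto
  from insert obtain e2 where e2: "e2 > 0" "\<forall>x. f x < e2 \<longrightarrow> R a x" by auto
  show ?case using e1 e2 by (intro exI[of _ "min e1 e2"]) auto
qed

theorem theorem2p5:
  fixes M :: "'s measure"
    and X :: "nat \<Rightarrow> 's \<Rightarrow> 'u::{metric_space, second_countable_topology}"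
    and r :: real
    and I :: "nat set set"
  assumes "prob_space M"
    and "\<forall>n. X n \<in> RV M"
    and "r \<ge> 0"
    and "analytic_P_ideal I"
  shows "kf_F_sigma_delta M (ideal_prob_LIM M I r X)"
proof -
  note P = assms(1)
  interpret prob_space M by fact
  obtain \<phi> where lsc: "lsc_submeasure \<phi>" and IE: "I = Exh \<phi>"
    using assms(4) unfolding analytic_P_ideal_def by auto
  have mono: "\<And>A B. A \<subseteq> B \<Longrightarrow> \<phi> A \<le> \<phi> B"
    using lsc unfolding lsc_submeasure_def submeasure_def by auto
  have lim: "\<And>A. (\<lambda>t. \<phi> (A \<inter> {..t})) \<longlonglongrightarrow> \<phi> A"
    using lsc unfolding lsc_submeasure_def by auto
  define A where "A k Y = {n. inverse (real (Suc k)) < measure M {s \<in> space M.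
      r + inverse (real (Suc k)) < dist (X n s) (Y s)}}" for k and Y :: "'s \<Rightarrow> 'u"
  define c where "c m = ennreal (inverse (real (Suc m)))" for m
  define G where "G k m t = {Y \<in> RV M. \<forall>u. \<phi> ((A k Y - {..t}) \<inter> {..u}) \<le> c m}" for k m t
  define F where "F i j = G (fst (prod_decode i)) (snd (prod_decode i)) j" for i j
  have cpos: "c m > 0" for m unfolding c_def by simp
  have Gclosed: "kf_closed M (G k m t)" for k m t
    unfolding kf_closed_def
  proof (intro conjI ballI impI)
    show "G k m t \<subseteq> RV M" unfolding G_def by auto
    fix Y assume Y: "Y \<in> RV M" and cl: "\<forall>e>0. \<exists>Z\<in>G k m t. ky_fan M Y Z < e"
    have "\<phi> ((A k Y - {..t}) \<inter> {..u}) \<le> c m" for u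
    proof -
      have "\<forall>n\<in>{..u}. \<exists>e>0. \<forall>Z. ky_fan M Y Z < e \<longrightarrow> (Z \<in> RV M \<longrightarrow> n \<in> A k Y \<longrightarrow> n \<in> A k Z)"
      proof
        fix n
        show "\<exists>e>0. \<forall>Z. ky_fan M Y Z < e \<longrightarrow> (Z \<in> RV M \<longrightarrow> n \<in> A k Y \<longrightarrow> n \<in> A k Z)"
        proof (cases "n \<in> A k Y")
          case True
          then show ?thesis
            using open_pt[OF P _ Y, of "X n" "inverse (real (Suc k))" "r + inverse (real (Suc k))"]
              assms(2) unfolding A_def by auto
        qed (auto intro: exI[of _ 1])
      qed
      from fin_choice_e[OF _ this] obtain e where e: "e > 0"
        "\<forall>n\<in>{..u}. \<forall>Z. ky_fan M Y Z < e \<longrightarrow> (Z \<in> RV M \<longrightarrow> n \<in> A k Y \<longrightarrow> n \<in> A k Z)"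
        by auto
      obtain Z where Z: "Z \<in> G k m t" "ky_fan M Y Z < e" using cl e(1) by auto
      have "(A k Y - {..t}) \<inter> {..u} \<subseteq> (A k Z - {..t}) \<inter> {..u}"
        using e(2) Z G_def by auto
      then have "\<phi> ((A k Y - {..t}) \<inter> {..u}) \<le> \<phi> ((A k Z - {..t}) \<inter> {..u})" by (rule mono)
      also have "\<dots> \<le> c m" using Z(1) unfolding G_def by auto
      finally show ?thesis .
    qed
    then show "Y \<in> G k m t" unfolding G_def using Y by auto
  qed
  have Exh_mono: "B \<in> Exh \<phi>" if "B \<subseteq> C" "C \<in> Exh \<phi>" for B C
  proof -
    have "(\<lambda>t. \<phi> (C - {..t})) \<longlonglongrightarrow> 0" using that unfolding Exh_def by auto
    moreover have "\<phi> (B - {..t}) \<le> \<phi> (C - {..t})" for t using that(1) by (intro mono) auto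
    ultimately have "(\<lambda>t. \<phi> (B - {..t})) \<longlonglongrightarrow> 0"
    proof (intro order_tendstoI)
      fix a :: ennreal assume a: "0 < a" and lC: "(\<lambda>t. \<phi> (C - {..t})) \<longlonglongrightarrow> 0"
        and le: "\<And>t. \<phi> (B - {..t}) \<le> \<phi> (C - {..t})"
      from order_tendstoD(2)[OF lC a] show "eventually (\<lambda>t. \<phi> (B - {..t}) < a) sequentially"
        by eventually_elim (use le in \<open>blast intro: order.strict_trans1\<close>)
    qed simp
    then show ?thesis unfolding Exh_def by auto
  qed
  have eq: "ideal_prob_LIM M I r X = (\<Inter>i. \<Union>j. F i j)"
  proof (intro equalityI subsetI)
    fix Y assume YL: "Y \<in> ideal_prob_LIM M I r X"
    then have Y: "Y \<in> RV M" unfolding ideal_prob_LIM_def by auto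
    show "Y \<in> (\<Inter>i. \<Union>j. F i j)"
    proof safe
      fix i
      obtain k m where km: "prod_decode i = (k, m)" by (cases "prod_decode i")
      have "A k Y \<in> Exh \<phi>"
        using YL unfolding ideal_prob_LIM_def A_def IE by auto
      then have "(\<lambda>t. \<phi> (A k Y - {..t})) \<longlonglongrightarrow> 0" unfolding Exh_def by auto
      from order_tendstoD(2)[OF this cpos[of m]] obtain t where t: "\<phi> (A k Y - {..t}) < c m"
        by (auto simp: eventually_sequentially)
      have "\<phi> ((A k Y - {..t}) \<inter> {..u}) \<le> c m" for u
        using mono[of "(A k Y - {..t}) \<inter> {..u}" "A k Y - {..t}"] t by auto
      then have "Y \<in> F i t" unfolding F_def G_def km using Y by auto
      then show "Y \<in> (\<Union>j. F i j)" by auto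
    qed
  next
    fix Y assume YF: "Y \<in> (\<Inter>i. \<Union>j. F i j)"
    then have Y: "Y \<in> RV M" unfolding F_def G_def by auto
    have G: "\<exists>t. Y \<in> G k m t" for k m
      using YF[unfolded F_def] by (auto dest!: spec[of _ "prod_encode (k, m)"])
    have AE: "A k Y \<in> Exh \<phi>" for k
    proof -
      have "(\<lambda>t. \<phi> (A k Y - {..t})) \<longlonglongrightarrow> 0"
      proof (rule order_tendstoI)
        fix a :: ennreal assume "a < 0" then show "eventually (\<lambda>t. a < \<phi> (A k Y - {..t})) sequentially"
          by simp
      next
        fix a :: ennreal assume a: "0 < a"
        obtain m where m: "c m < a"
        proof (cases "a = top")
          case True then show ?thesis using that[of 0] by (simp add: c_def)
        next
          case False
          then obtain x where x: "a = ennreal x" "x \<ge> 0" by (cases a) auto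
          then have "x > 0" using a by auto
          then obtain m where "inverse (real (Suc m)) < x" using reals_Archimedean by blast
          then show ?thesis using that[of m] x \<open>x > 0\<close> by (simp add: c_def ennreal_lessI)
        qed
        obtain t where t: "Y \<in> G k m t" using G by auto
        have "\<phi> (A k Y - {..t}) \<le> c m"
        proof (rule LIMSEQ_le_const2[OF lim])
          show "\<exists>N. \<forall>n\<ge>N. \<phi> ((A k Y - {..t}) \<inter> {..n}) \<le> c m" using t unfolding G_def by auto
        qed
        have "\<phi> (A k Y - {..t'}) < a" if "t' \<ge> t" for t'
        proof -
          have "\<phi> (A k Y - {..t'}) \<le> \<phi> (A k Y - {..t})" using that by (intro mono) auto
          also have "\<dots> \<le> c m" by fact
          also have "\<dots> < a" by fact
          finally show ?thesis .
        qed
        then have "\<forall>t'\<ge>t. \<phi> (A k Y - {..t'}) < a" by blast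
        then show "eventually (\<lambda>t. \<phi> (A k Y - {..t}) < a) sequentially"
          by (auto simp: eventually_sequentially)
      qed
      then show ?thesis unfolding Exh_def by auto
    qed
    show "Y \<in> ideal_prob_LIM M I r X"
      unfolding ideal_prob_LIM_def IE
    proof (intro CollectI conjI allI impI Y)
      fix \<epsilon> \<delta> :: real assume e: "\<epsilon> > 0" and d: "\<delta> > 0"
      obtain k where k: "inverse (real (Suc k)) < min \<epsilon> \<delta>"
        using reals_Archimedean[of "min \<epsilon> \<delta>"] e d by auto
      have "{n. measure M {s \<in> space M. dist (X n s) (Y s) > r + \<epsilon>} > \<delta>} \<subseteq> A k Y"
      proof
        fix n assume "n \<in> {n. measure M {s \<in> space M. dist (X n s) (Y s) > r + \<epsilon>} > \<delta>}"
        then have h: "\<delta> < measure M {s \<in> space M. r + \<epsilon> < dist (X n s) (Y s)}" by simp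
        have "measure M {s \<in> space M. r + \<epsilon> < dist (X n s) (Y s)}
            \<le> measure M {s \<in> space M. r + inverse (real (Suc k)) < dist (X n s) (Y s)}"
          by (rule finite_measure_mono) (use k RV_meas[OF _ Y, of "X n"] assms(2) in auto)
        then show "n \<in> A k Y" unfolding A_def using h k by auto
      qed
      then show "{n. measure M {s \<in> space M. dist (X n s) (Y s) > r + \<epsilon>} > \<delta>} \<in> Exh \<phi>"
        using Exh_mono AE by blast
    qed
  qed
  show ?thesis unfolding kf_F_sigma_delta_def
    by (intro exI[of _ F] conjI allI eq) (simp add: F_def Gclosed)
qed

end
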